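(* Let $X$ be a set, $T:\mathcal P(X)\to\mathcal P(X)$ an order reversing quasi involution, and $X_0=\{x\in X: x\in T(\{x\})\}$. Call $K\subseteq X$ invariant if $TK=K$. (1) If $TX_0=X_0$, then $X_0$ is the unique invariant set. (2) If $TX_0\not\subseteq X_0$, then there is no invariant set. (3) There exist a set $X$ and an order reversing quasi involution $T$ on $\mathcal P(X)$ with $TX_0\subsetneq X_0$ having no invariant set; there exist such $X,T$ with $TX_0\subsetneq X_0$ having exactly one invariant set; and there exist such $X,T$ with $TX_0\subsetneq X_0$ having more than one invariant set.
   Context: $\mathcal P(X)$ denotes the power set of $X$. A map $T:\mathcal P(X)\to\mathcal P(X)$ is an order reversing quasi involution if for all $K,L\subseteq X$: (i) $K\subseteq TTK$, and (ii) $L\subseteq K$ implies $TK\subseteq TL$. *)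

theory Defs
  imports Main
begin

definition orqi :: "'a set \<Rightarrow> ('a set \<Rightarrow> 'a set) \<Rightarrow> bool" where
  "orqi X T \<longleftrightarrow>
     (\<forall>K. K \<subseteq> X \<longrightarrow> T K \<subseteq> X) \<and>
     (\<forall>K. K \<subseteq> X \<longrightarrow> K \<subseteq> T (T K)) \<and>
     (\<forall>K L. K \<subseteq> X \<longrightarrow> L \<subseteq> K \<longrightarrow> T K \<subseteq> T L)"

definition X0 :: "'a set \<Rightarrow> ('a set \<Rightarrow> 'a set) \<Rightarrow> 'a set" where
  "X0 X T = {x \<in> X. x \<in> T {x}}"

definition invariant :: "'a set \<Rightarrow> ('a set \<Rightarrow> 'a set) \<Rightarrow> 'a set \<Rightarrow> bool" where
  "invariant X T K \<longleftrightarrow> K \<subseteq> X \<and> T K = K"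

end

theory Submission
  imports Defs
begin

definition pol :: "('a \<Rightarrow> 'a \<Rightarrow> bool) \<Rightarrow> 'a set \<Rightarrow> 'a set \<Rightarrow> 'a set" where
  "pol R X K = {y \<in> X. \<forall>x\<in>K. R x y}"

lemma pol_empty: "pol R X {} = X" by (simp add: pol_def)
lemma pol_ins: "pol R X (insert a K) = {y \<in> pol R X K. R a y}" by (auto simp add: pol_def)

lemma pol_orqi: assumes "\<And>x y. R x y \<Longrightarrow> R y x" shows "orqi X (pol R X)"
proof -
  have "(\<forall>K. K \<subseteq> X \<longrightarrow> pol R X K \<subseteq> X)" "(\<forall>K. K \<subseteq> X \<longrightarrow> K \<subseteq> pol R X (pol R X K))"
    "(\<forall>K L. K \<subseteq> X \<longrightarrow> L \<subseteq> K \<longrightarrow> pol R X K \<subseteq> pol R X L)"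
  unfolding pol_def using assms by auto
  then show ?thesis unfolding orqi_def by simp
qed

lemma inv_sub: assumes "orqi X T" "invariant X T K" shows "K \<subseteq> X0 X T"
proof
  fix x assume x: "x \<in> K"
  have m: "\<forall>K L. K \<subseteq> X \<longrightarrow> L \<subseteq> K \<longrightarrow> T K \<subseteq> T L" using assms(1) unfolding orqi_def by simp
  have k: "K \<subseteq> X" using assms(2) unfolding invariant_def by simp
  have "T K \<subseteq> T {x}" using m k x by simp
  then show "x \<in> X0 X T" using assms x unfolding invariant_def X0_def by auto
qed

lemma X0_sub: "X0 X T \<subseteq> X" unfolding X0_def by auto

lemma pow_cases:
  assumes "K \<subseteq> {a, b}" shows "K = {} \<or> K = {a} \<or> K = {b} \<or> K = {a,b}"
  using assms by blast

definition R1 :: "nat \<Rightarrow> nat \<Rightarrow> bool" where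
  "R1 x y = ((x,y) \<in> {(0,3),(3,0),(1,2),(2,1),(2,2),(3,3)})"
definition X1 :: "nat set" where "X1 = {0,1,2,3}"

lemma ex1: "orqi X1 (pol R1 X1) \<and> pol R1 X1 (X0 X1 (pol R1 X1)) \<subset> X0 X1 (pol R1 X1)
   \<and> (\<nexists>K. invariant X1 (pol R1 X1) K)"
proof -
  have o: "orqi X1 (pol R1 X1)" by (rule pol_orqi) (auto simp: R1_def)
  have x0: "X0 X1 (pol R1 X1) = {2,3}" unfolding X0_def X1_def by (simp add: pol_ins pol_empty R1_def) auto
  have a: "pol R1 X1 {} = X1" "pol R1 X1 {2} = {1,2}" "pol R1 X1 {3} = {0,3}" "pol R1 X1 {2,3} = {}"
    unfolding X1_def by (simp_all add: pol_ins pol_empty R1_def) auto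
  have n: "\<nexists>K. invariant X1 (pol R1 X1) K"
  proof
    assume "\<exists>K. invariant X1 (pol R1 X1) K"
    then obtain K where i: "invariant X1 (pol R1 X1) K" by blast
    have "K \<subseteq> {2,3}" using inv_sub[OF o i] x0 by simp
    then have "K = {} \<or> K = {2} \<or> K = {3} \<or> K = {2,3}" by (rule pow_cases)
    then show False using i a unfolding invariant_def by (auto simp: X1_def)
  qed
  show ?thesis using o n x0 a(4) by auto
qed

definition R2 :: "nat \<Rightarrow> nat \<Rightarrow> bool" where
  "R2 x y = ((x,y) \<in> {(0,2),(2,0),(1,1),(2,2)})"
definition X2 :: "nat set" where "X2 = {0,1,2}"

lemma ex2: "orqi X2 (pol R2 X2) \<and> pol R2 X2 (X0 X2 (pol R2 X2)) \<subset> X0 X2 (pol R2 X2)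
   \<and> (\<exists>!K. invariant X2 (pol R2 X2) K)"
proof -
  have o: "orqi X2 (pol R2 X2)" by (rule pol_orqi) (auto simp: R2_def)
  have x0: "X0 X2 (pol R2 X2) = {1,2}" unfolding X0_def X2_def by (simp add: pol_ins pol_empty R2_def) auto
  have a: "pol R2 X2 {} = X2" "pol R2 X2 {1} = {1}" "pol R2 X2 {2} = {0,2}" "pol R2 X2 {1,2} = {}"
    unfolding X2_def by (simp_all add: pol_ins pol_empty R2_def) auto
  have n: "\<exists>!K. invariant X2 (pol R2 X2) K"
  proof
    show "invariant X2 (pol R2 X2) {1}" unfolding invariant_def using a by (simp add: X2_def)
  next
    fix K assume i: "invariant X2 (pol R2 X2) K"
    have "K \<subseteq> {1,2}" using inv_sub[OF o i] x0 by simp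
    then have "K = {} \<or> K = {1} \<or> K = {2} \<or> K = {1,2}" by (rule pow_cases)
    then show "K = {1}" using i a unfolding invariant_def by (auto simp: X2_def)
  qed
  show ?thesis using o n x0 a(4) by auto
qed

definition R3 :: "nat \<Rightarrow> nat \<Rightarrow> bool" where
  "R3 x y = ((x,y) \<in> {(0,0),(1,1)})"
definition X3 :: "nat set" where "X3 = {0,1}"

lemma ex3a: "pol R3 X3 {0} = {0}" unfolding X3_def by (simp add: pol_ins pol_empty R3_def) auto
lemma ex3b: "pol R3 X3 {1} = {1}" unfolding X3_def by (simp add: pol_ins pol_empty R3_def) auto
lemma ex3c: "pol R3 X3 {0,1} = {}" unfolding X3_def by (simp add: pol_ins pol_empty R3_def)
lemma ex3d: "X0 X3 (pol R3 X3) = {0,1}"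
proof (rule set_eqI)
  fix x :: nat
  show "x \<in> X0 X3 (pol R3 X3) \<longleftrightarrow> x \<in> {0,1}"
  proof (cases "x = 0 \<or> x = 1")
    case True
    have "x \<in> X3" using True unfolding X3_def by auto
    moreover have "x \<in> pol R3 X3 {x}" using True ex3a ex3b by auto
    ultimately show ?thesis using True unfolding X0_def by auto
  next
    case False then show ?thesis unfolding X0_def X3_def by simp
  qed
qed

lemma ex3: "orqi X3 (pol R3 X3) \<and> pol R3 X3 (X0 X3 (pol R3 X3)) \<subset> X0 X3 (pol R3 X3)
   \<and> invariant X3 (pol R3 X3) {0} \<and> invariant X3 (pol R3 X3) {1}"
proof (intro conjI)
  show "orqi X3 (pol R3 X3)" by (rule pol_orqi) (auto simp: R3_def)
  show "pol R3 X3 (X0 X3 (pol R3 X3)) \<subset> X0 X3 (pol R3 X3)" unfolding ex3d ex3c psubset_eq by simp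
  show "invariant X3 (pol R3 X3) {0}" unfolding invariant_def ex3a by (simp add: X3_def)
  show "invariant X3 (pol R3 X3) {1}" unfolding invariant_def ex3b by (simp add: X3_def)
qed

theorem lemma6p2:
  shows
   "(\<forall>(X::'a set) T. orqi X T \<longrightarrow> T (X0 X T) = X0 X T \<longrightarrow>
        (\<forall>K. invariant X T K \<longleftrightarrow> K = X0 X T))
    \<and> (\<forall>(X::'a set) T. orqi X T \<longrightarrow> \<not> T (X0 X T) \<subseteq> X0 X T \<longrightarrow>
        (\<nexists>K. invariant X T K))
    \<and> (\<exists>(X::nat set) T. orqi X T \<and> T (X0 X T) \<subset> X0 X T \<and> (\<nexists>K. invariant X T K))
    \<and> (\<exists>(X::nat set) T. orqi X T \<and> T (X0 X T) \<subset> X0 X T \<and> (\<exists>!K. invariant X T K))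
    \<and> (\<exists>(X::nat set) T. orqi X T \<and> T (X0 X T) \<subset> X0 X T \<and>
        (\<exists>K L. invariant X T K \<and> invariant X T L \<and> K \<noteq> L))"
proof (intro conjI)
  show "\<forall>(X::'a set) T. orqi X T \<longrightarrow> T (X0 X T) = X0 X T \<longrightarrow>
        (\<forall>K. invariant X T K \<longleftrightarrow> K = X0 X T)"
  proof (intro allI impI iffI)
    fix X :: "'a set" and T K assume o: "orqi X T" and e: "T (X0 X T) = X0 X T"
    { assume i: "invariant X T K"
      have s: "K \<subseteq> X0 X T" using inv_sub[OF o i] .
      have m: "\<forall>K L. K \<subseteq> X \<longrightarrow> L \<subseteq> K \<longrightarrow> T K \<subseteq> T L" using o unfolding orqi_def by simp
      have "T (X0 X T) \<subseteq> T K" using m s X0_sub[of X T] by simp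
      then show "K = X0 X T" using s e i unfolding invariant_def by auto }
    { assume "K = X0 X T" then show "invariant X T K" using e X0_sub[of X T]
        unfolding invariant_def by auto }
  qed
  show "\<forall>(X::'a set) T. orqi X T \<longrightarrow> \<not> T (X0 X T) \<subseteq> X0 X T \<longrightarrow>
        (\<nexists>K. invariant X T K)"
  proof (intro allI impI notI)
    fix X :: "'a set" and T assume o: "orqi X T" and n: "\<not> T (X0 X T) \<subseteq> X0 X T"
      and "\<exists>K. invariant X T K"
    then obtain K where i: "invariant X T K" by blast
    have s: "K \<subseteq> X0 X T" using inv_sub[OF o i] .
    have m: "\<forall>K L. K \<subseteq> X \<longrightarrow> L \<subseteq> K \<longrightarrow> T K \<subseteq> T L" using o unfolding orqi_def by simp
    have "T (X0 X T) \<subseteq> T K" using m s X0_sub[of X T] by simp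
    then show False using n s i unfolding invariant_def by auto
  qed
  show "\<exists>(X::nat set) T. orqi X T \<and> T (X0 X T) \<subset> X0 X T \<and> (\<nexists>K. invariant X T K)"
    by (rule exI[of _ X1], rule exI[of _ "pol R1 X1"], rule ex1)
  show "\<exists>(X::nat set) T. orqi X T \<and> T (X0 X T) \<subset> X0 X T \<and> (\<exists>!K. invariant X T K)"
    by (rule exI[of _ X2], rule exI[of _ "pol R2 X2"], rule ex2)
  show "\<exists>(X::nat set) T. orqi X T \<and> T (X0 X T) \<subset> X0 X T \<and>
        (\<exists>K L. invariant X T K \<and> invariant X T L \<and> K \<noteq> L)"
  proof (rule exI[of _ X3], rule exI[of _ "pol R3 X3"], intro conjI)
    show "orqi X3 (pol R3 X3)" using ex3 by simp
    show "pol R3 X3 (X0 X3 (pol R3 X3)) \<subset> X0 X3 (pol R3 X3)" using ex3 by simp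
    show "\<exists>K L. invariant X3 (pol R3 X3) K \<and> invariant X3 (pol R3 X3) L \<and> K \<noteq> L"
      using ex3 by (intro exI[of _ "{0}"] exI[of _ "{1}"]) simp
  qed
qed

end
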